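(* For every $t\ge1$ and all sequences $x^t\in\mathcal X^t$, $y^t\in\mathcal Y^t$, $$\log\frac{p_{\hat\theta}(x^t\mid y^t)}{p_U(x^t\mid y^t)}\le\frac{(|\mathcal X|-1)|\mathcal Y|}{2}\log\frac{t}{2\pi}+|\mathcal Y|\log\frac{\Gamma(1/2)^{|\mathcal X|}}{\Gamma(|\mathcal X|/2)}+\left(\frac{|\mathcal X|^2|\mathcal Y|}{4}+\frac{|\mathcal X||\mathcal Y|}{2}\right)\log e,$$ where $\hat\theta=\arg\max_{\theta'\in\Lambda}p_{\theta'}(x^t\mid y^t)$.
   Context: All logarithms are to base 2. $\mathcal X=\{1,\dots,|\mathcal X|\}$ and $\mathcal Y=\{1,\dots,|\mathcal Y|\}$ are finite alphabets. Let $\Lambda=\{\theta=(\theta_{ij})\in[0,1]^{|\mathcal X||\mathcal Y|}:\sum_{i=1}^{|\mathcal X|}\theta_{ij}=1 \text{ for } j=1,\dots,|\mathcal Y|\}$ be the set of conditional distributions of $x$ given $y$ ($\theta_{ij}$ playing the role of $\Pr\{X=i\mid Y=j\}$). For $\theta\in\Lambda$ define $p_\theta(x^t\mid y^t)=\prod_{k=1}^t\theta_{x_k y_k}$. Let $w$ be Jeffreys' prior on $\Lambda$: $w(\theta)=\frac{1}{B\sqrt{\prod_{i,j}\theta_{ij}}}$ with $B=\int_\Lambda\frac{d\theta}{\sqrt{\prod_{i,j}\theta_{ij}}}$, and define the mixture (universal) probability assignment $p_U(x^t\mid y^t)=\int_\Lambda w(\theta)\,p_\theta(x^t\mid y^t)\,d\theta$.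 *)

theory Defs
  imports "HOL-Analysis.Analysis" "HOL-Probability.Probability"
begin

text \<open>Alphabets: X = {1..a}, Y = {1..b}. A conditional distribution theta is a function
  theta i j = Pr(X = i | Y = j); only its values on {1..a} x {1..b} matter.\<close>

definition Lambda :: "nat \<Rightarrow> nat \<Rightarrow> (nat \<Rightarrow> nat \<Rightarrow> real) set" where
  "Lambda a b = {\<theta>. (\<forall>i\<in>{1..a}. \<forall>j\<in>{1..b}. 0 \<le> \<theta> i j \<and> \<theta> i j \<le> 1)
                    \<and> (\<forall>j\<in>{1..b}. (\<Sum>i=1..a. \<theta> i j) = 1)}"

definition p_cond :: "nat \<Rightarrow> (nat \<Rightarrow> nat) \<Rightarrow> (nat \<Rightarrow> nat) \<Rightarrow> (nat \<Rightarrow> nat \<Rightarrow> real) \<Rightarrow> real" where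
  "p_cond t x y \<theta> = (\<Prod>k=1..t. \<theta> (x k) (y k))"

text \<open>Lebesgue measure d theta on Lambda: coordinates theta_{ij}, i < a, are free,
  theta_{aj} = 1 - sum of the others.\<close>
definition free_coords :: "nat \<Rightarrow> nat \<Rightarrow> (nat \<times> nat) set" where
  "free_coords a b = {1..<a} \<times> {1..b}"

definition theta_of :: "nat \<Rightarrow> (nat \<times> nat \<Rightarrow> real) \<Rightarrow> nat \<Rightarrow> nat \<Rightarrow> real" where
  "theta_of a \<phi> = (\<lambda>i j. if i = a then 1 - (\<Sum>i'\<in>{1..<a}. \<phi> (i', j)) else \<phi> (i, j))"

definition param_measure :: "nat \<Rightarrow> nat \<Rightarrow> (nat \<times> nat \<Rightarrow> real) measure" where
  "param_measure a b = PiM (free_coords a b) (\<lambda>_. lborel)"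

definition jeffreys_density :: "nat \<Rightarrow> nat \<Rightarrow> (nat \<Rightarrow> nat \<Rightarrow> real) \<Rightarrow> real" where
  "jeffreys_density a b \<theta> =
     (if \<theta> \<in> Lambda a b then 1 / sqrt (\<Prod>i\<in>{1..a}. \<Prod>j\<in>{1..b}. \<theta> i j) else 0)"

definition p_U :: "nat \<Rightarrow> nat \<Rightarrow> nat \<Rightarrow> (nat \<Rightarrow> nat) \<Rightarrow> (nat \<Rightarrow> nat) \<Rightarrow> real" where
  "p_U a b t x y =
     (\<integral>\<phi>. jeffreys_density a b (theta_of a \<phi>) * p_cond t x y (theta_of a \<phi>) \<partial>param_measure a b)
     / (\<integral>\<phi>. jeffreys_density a b (theta_of a \<phi>) \<partial>param_measure a b)"

end

theory Submission
  imports Defs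
begin

lemma beta_nn:
  fixes p q r :: real
  assumes p: "p > 0" and q: "q > 0"
  shows "(\<integral>\<^sup>+y. ennreal (if 0 \<le> y \<and> y \<le> r then y powr (p-1) * (r-y) powr (q-1) else 0) \<partial>lborel)
       = (if 0 \<le> r then ennreal (r powr (p+q-1) * Beta p q) else 0)"
proof (cases "r > 0")
  case False
  have "(\<integral>\<^sup>+y. ennreal (if 0 \<le> y \<and> y \<le> r then y powr (p-1) * (r-y) powr (q-1) else 0) \<partial>lborel)
       = (\<integral>\<^sup>+(y::real). (0::ennreal) \<partial>lborel)"
    proof (rule nn_integral_cong_AE)
    show "AE y in lborel. ennreal (if 0 \<le> y \<and> y \<le> r then y powr (p-1) * (r-y) powr (q-1) else 0) = 0"
      using AE_lborel_singleton[of 0] by eventually_elim (use False in auto)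
  qed
  then show ?thesis using False by auto
next
  case True
  define u where "u = r"
  have u: "u > 0" using True u_def by simp
  have "(\<integral>\<^sup>+t. ennreal (if 0 \<le> t \<and> t \<le> r then t powr (p-1) * (r-t) powr (q-1) else 0) \<partial>lborel)
      = (\<integral>\<^sup>+t. ennreal (indicator {0..u} t * t powr (p - 1) * (u - t) powr (q - 1)) \<partial>lborel)"
    by (intro nn_integral_cong) (auto simp: indicator_def u_def)
  also have "\<dots> = 
              (\<integral>\<^sup>+t. ennreal (indicator {0..1} t * (u * t) powr (p - 1) * (u - u * t) powr (q - 1)) 
                \<partial>distr lborel borel ((*) (1 / u)))" (is "_ = nn_integral _ ?f")
        using u
        by (subst nn_integral_distr) (auto simp: indicator_def field_simps intro!: nn_integral_cong)
  also have "distr lborel borel ((*) (1 / u)) = density lborel (\<lambda>_. u)"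
        using u by (subst lborel_distr_mult) auto
  also have "nn_integral \<dots> ?f = (\<integral>\<^sup>+x. ennreal (indicator {0..1} x * (u * (u * x) powr (p - 1) *
                                              (u * (1 - x)) powr (q - 1))) \<partial>lborel)" using u
        by (subst nn_integral_density) (auto simp: ennreal_mult' [symmetric] algebra_simps)
  also have "\<dots> = (\<integral>\<^sup>+x. ennreal (u powr (p + q - 1)) * 
                            ennreal (indicator {0..1} x * x powr (p - 1) *
                                       (1 - x) powr (q - 1)) \<partial>lborel)" using u p q
        by (intro nn_integral_cong)
           (auto simp: indicator_def powr_mult powr_add powr_diff mult_ac ennreal_mult' [symmetric])
  also have "\<dots> = ennreal (u powr (p + q - 1)) * 
                        (\<integral>\<^sup>+x. ennreal (indicator {0..1} x * x powr (p - 1) *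
                                         (1 - x) powr (q - 1)) \<partial>lborel)"
        by (subst nn_integral_cmult) auto
  also have "(\<integral>\<^sup>+x. ennreal (indicator {0..1} x * x powr (p - 1) *
                         (1 - x) powr (q - 1)) \<partial>lborel) = Beta p q"
    using nn_integral_has_integral_lebesgue[OF _ has_integral_Beta_real[OF p q]]
    by (simp add: mult_ac)
  finally show ?thesis using u u_def
    by (simp add: ennreal_mult' [symmetric] Beta_def)
qed


definition colf :: "'i set \<Rightarrow> ('i \<Rightarrow> real) \<Rightarrow> real \<Rightarrow> ('i \<Rightarrow> real) \<Rightarrow> real" where
  "colf S \<alpha> b \<phi> = (if (\<forall>i\<in>S. 0 \<le> \<phi> i) \<and> sum \<phi> S \<le> 1
     then (\<Prod>i\<in>S. \<phi> i powr (\<alpha> i - 1)) * (1 - sum \<phi> S) powr (b - 1) else 0)"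

lemma colf_meas:
  assumes "finite S" "S \<subseteq> I"
  shows "(\<lambda>\<phi>. colf S \<alpha> b \<phi>) \<in> borel_measurable (PiM I (\<lambda>_. lborel))"
proof -
  have c[measurable]: "(\<lambda>\<phi>. \<phi> i) \<in> borel_measurable (PiM I (\<lambda>_. lborel))" if "i \<in> S" for i
    using that assms measurable_component_singleton[of i I "\<lambda>_. lborel"] by auto
  have s[measurable]: "(\<lambda>\<phi>. sum \<phi> S) \<in> borel_measurable (PiM I (\<lambda>_. lborel))"
    by (rule borel_measurable_sum) (rule c)
  have p[measurable]: "(\<lambda>\<phi>. \<Prod>i\<in>S. \<phi> i powr (\<alpha> i - 1)) \<in> borel_measurable (PiM I (\<lambda>_. lborel))"
    proof (intro borel_measurable_prod)
    fix i assume "i \<in> S"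
    note c[OF this]
    then show "(\<lambda>x. x i powr (\<alpha> i - 1)) \<in> borel_measurable (Pi\<^sub>M I (\<lambda>_. lborel))" by measurable
  qed
  have q[measurable]: "Measurable.pred (PiM I (\<lambda>_. lborel)) (\<lambda>\<phi>. \<forall>i\<in>S. 0 \<le> (\<phi> i::real))"
    proof (intro pred_intros_finite[OF assms(1)])
    fix i assume "i \<in> S"
    note c[OF this]
    then show "Measurable.pred (Pi\<^sub>M I (\<lambda>_. lborel)) (\<lambda>\<phi>. 0 \<le> (\<phi> i::real))" by measurable
  qed
  show ?thesis unfolding colf_def by measurable
qed

lemma colf_nonneg: "colf S \<alpha> b \<phi> \<ge> 0"
  unfolding colf_def by (auto intro!: prod_nonneg mult_nonneg_nonneg)

lemma colf_cong: "(\<And>i. i \<in> S \<Longrightarrow> \<phi> i = \<psi> i) \<Longrightarrow> colf S \<alpha> b \<phi> = colf S \<alpha> b \<psi>"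
  unfolding colf_def by (simp cong: prod.cong sum.cong)

lemma colf_empty: "colf {} \<alpha> b \<phi> = 1"
  unfolding colf_def by simp

lemma colf_insert:
  assumes "finite S" "i \<notin> S"
  shows "colf (insert i S) \<alpha> b (x(i:=y)) =
     (if 0 \<le> y \<and> y \<le> 1 - sum x S then y powr (\<alpha> i - 1) * ((1 - sum x S) - y) powr (b - 1) else 0)
     * (if (\<forall>k\<in>S. 0 \<le> x k) then (\<Prod>k\<in>S. x k powr (\<alpha> k - 1)) else 0)"
proof -
  have e1: "sum (x(i:=y)) S = sum x S" and e2: "prod (\<lambda>k. (x(i:=y)) k powr (\<alpha> k - 1)) S = prod (\<lambda>k. x k powr (\<alpha> k - 1)) S"
    using assms by (auto intro!: sum.cong prod.cong)
  have e3: "(\<forall>k\<in>S. 0 \<le> (x(i:=y)) k) = (\<forall>k\<in>S. 0 \<le> x k)" using assms by auto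
  show ?thesis unfolding colf_def using assms e1 e2 e3
    by (auto simp: algebra_simps)
qed

lemma colf_shift:
  "colf S \<alpha> (a + b) x = (if 0 \<le> 1 - sum x S then (1 - sum x S) powr (a + b - 1) else 0)
     * (if (\<forall>k\<in>S. 0 \<le> x k) then (\<Prod>k\<in>S. x k powr (\<alpha> k - 1)) else 0)"
  unfolding colf_def by auto

definition colset :: "'i set \<Rightarrow> ('i \<Rightarrow> 'j) \<Rightarrow> 'j \<Rightarrow> 'i set" where
  "colset I col j = {i\<in>I. col i = j}"

definition dirf :: "'i set \<Rightarrow> ('i \<Rightarrow> 'j) \<Rightarrow> ('i \<Rightarrow> real) \<Rightarrow> ('j \<Rightarrow> real) \<Rightarrow> 'j set \<Rightarrow> ('i \<Rightarrow> real) \<Rightarrow> real" where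
  "dirf I col \<alpha> \<beta> J \<phi> = (\<Prod>j\<in>J. colf (colset I col j) \<alpha> (\<beta> j) \<phi>)"

definition dirv :: "'i set \<Rightarrow> ('i \<Rightarrow> 'j) \<Rightarrow> ('i \<Rightarrow> real) \<Rightarrow> ('j \<Rightarrow> real) \<Rightarrow> 'j set \<Rightarrow> real" where
  "dirv I col \<alpha> \<beta> J = (\<Prod>j\<in>J. (\<Prod>i\<in>colset I col j. Gamma (\<alpha> i)) * Gamma (\<beta> j) / Gamma (sum \<alpha> (colset I col j) + \<beta> j))"

lemma dirf_nonneg: "dirf I col \<alpha> \<beta> J \<phi> \<ge> 0"
  unfolding dirf_def by (auto intro!: prod_nonneg colf_nonneg)

lemma dirf_meas:
  assumes "finite I"
  shows "(\<lambda>\<phi>. dirf I col \<alpha> \<beta> J \<phi>) \<in> borel_measurable (PiM I (\<lambda>_. lborel))"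
  unfolding dirf_def
  by (intro borel_measurable_prod colf_meas) (use assms in \<open>auto simp: colset_def\<close>)

lemma dir:
  fixes I :: "'i set" and J :: "'j set"
  assumes "finite I" "finite J" "col ` I \<subseteq> J" "\<forall>i\<in>I. \<alpha> i > 0" "\<forall>j\<in>J. \<beta> j > 0"
  shows "(\<integral>\<^sup>+\<phi>. ennreal (dirf I col \<alpha> \<beta> J \<phi>) \<partial>PiM I (\<lambda>_. lborel)) = ennreal (dirv I col \<alpha> \<beta> J)"
  using assms
proof (induction I arbitrary: \<beta> rule: finite_induct)
  case empty
  have "dirf {} col \<alpha> \<beta> J \<phi> = 1" for \<phi>
    unfolding dirf_def colset_def by (simp add: colf_empty)
  moreover have "dirv {} col \<alpha> \<beta> J = 1"
    unfolding dirv_def colset_def using empty.prems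
    by (intro prod.neutral) (force simp: Gamma_eq_zero_iff dest: nonpos_Ints_nonpos)
  ultimately show ?case by (simp add: PiM_empty)
next
  case (insert i I)
  interpret product_sigma_finite "\<lambda>_. lborel::real measure" by standard
  define j0 where "j0 = col i"
  have j0J: "j0 \<in> J" using insert.prems j0_def by auto
  have ai: "\<alpha> i > 0" using insert.prems by auto
  have bj0: "\<beta> j0 > 0" using insert.prems j0J by auto
  have B0: "Beta (\<alpha> i) (\<beta> j0) \<ge> 0" using ai bj0 by (simp add: Beta_def)
  define \<beta>' where "\<beta>' = \<beta>(j0 := \<alpha> i + \<beta> j0)"
  define S where "S = colset I col j0"
  have S: "finite S" "i \<notin> S" using insert.hyps by (auto simp: S_def colset_def)
  have cs: "colset (insert i I) col j = (if j = j0 then insert i (colset I col j) else colset I col j)" for j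
    by (auto simp: colset_def j0_def)
  have cs2: "i \<notin> colset I col j" for j using insert.hyps by (auto simp: colset_def)
  define A where "A = (\<lambda>x. (\<Prod>j\<in>J-{j0}. colf (colset I col j) \<alpha> (\<beta> j) x) *
       (if (\<forall>k\<in>S. 0 \<le> x k) then (\<Prod>k\<in>S. x k powr (\<alpha> k - 1)) else 0))"
  have Anonneg: "A x \<ge> 0" for x
    unfolding A_def by (auto intro!: mult_nonneg_nonneg prod_nonneg colf_nonneg powr_ge_zero)
  have split: "dirf (insert i I) col \<alpha> \<beta> J (x(i:=y)) = A x *
      (if 0 \<le> y \<and> y \<le> 1 - sum x S then y powr (\<alpha> i - 1) * ((1 - sum x S) - y) powr (\<beta> j0 - 1) else 0)" for x y
  proof -
    have "dirf (insert i I) col \<alpha> \<beta> J (x(i:=y)) = colf (insert i S) \<alpha> (\<beta> j0) (x(i:=y)) *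
       (\<Prod>j\<in>J-{j0}. colf (colset I col j) \<alpha> (\<beta> j) (x(i:=y)))"
      unfolding dirf_def using j0J insert.prems by (subst prod.remove[of J j0]) (auto simp: cs S_def)
    also have "(\<Prod>j\<in>J-{j0}. colf (colset I col j) \<alpha> (\<beta> j) (x(i:=y))) = (\<Prod>j\<in>J-{j0}. colf (colset I col j) \<alpha> (\<beta> j) x)"
      by (intro prod.cong refl colf_cong) (use cs2 in auto)
    finally have eq1: "dirf (insert i I) col \<alpha> \<beta> J (x(i:=y)) = colf (insert i S) \<alpha> (\<beta> j0) (x(i:=y)) *
       (\<Prod>j\<in>J-{j0}. colf (colset I col j) \<alpha> (\<beta> j) x)" .
    show ?thesis unfolding eq1 colf_insert[OF S] A_def by (simp only: mult_ac)
  qed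
  have shift: "dirf I col \<alpha> \<beta>' J x = A x * (if 0 \<le> 1 - sum x S then (1 - sum x S) powr (\<alpha> i + \<beta> j0 - 1) else 0)" for x
  proof -
    have "dirf I col \<alpha> \<beta>' J x = colf S \<alpha> (\<alpha> i + \<beta> j0) x * (\<Prod>j\<in>J-{j0}. colf (colset I col j) \<alpha> (\<beta>' j) x)"
      unfolding dirf_def using j0J insert.prems by (subst prod.remove[of J j0]) (auto simp: S_def \<beta>'_def)
    also have "(\<Prod>j\<in>J-{j0}. colf (colset I col j) \<alpha> (\<beta>' j) x) = (\<Prod>j\<in>J-{j0}. colf (colset I col j) \<alpha> (\<beta> j) x)"
      by (intro prod.cong refl) (auto simp: \<beta>'_def)
    finally show ?thesis by (simp add: colf_shift A_def mult_ac)
  qed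
  have "(\<integral>\<^sup>+\<phi>. ennreal (dirf (insert i I) col \<alpha> \<beta> J \<phi>) \<partial>PiM (insert i I) (\<lambda>_. lborel))
     = (\<integral>\<^sup>+x. (\<integral>\<^sup>+y. ennreal (dirf (insert i I) col \<alpha> \<beta> J (x(i:=y))) \<partial>lborel) \<partial>PiM I (\<lambda>_. lborel))"
    using insert.hyps by (intro product_nn_integral_insert) (auto intro!: measurable_compose[OF dirf_meas])
  also have "\<dots> = (\<integral>\<^sup>+x. ennreal (Beta (\<alpha> i) (\<beta> j0) * dirf I col \<alpha> \<beta>' J x) \<partial>PiM I (\<lambda>_. lborel))"
  proof (intro nn_integral_cong)
    fix x :: "'i \<Rightarrow> real"
    have "(\<integral>\<^sup>+y. ennreal (dirf (insert i I) col \<alpha> \<beta> J (x(i:=y))) \<partial>lborel)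
       = (\<integral>\<^sup>+y. ennreal (A x) * ennreal (if 0 \<le> y \<and> y \<le> 1 - sum x S then y powr (\<alpha> i - 1) * ((1 - sum x S) - y) powr (\<beta> j0 - 1) else 0) \<partial>lborel)"
      unfolding split by (intro nn_integral_cong) (auto simp: ennreal_mult' Anonneg)
    also have "\<dots> = ennreal (A x) * (\<integral>\<^sup>+y. ennreal (if 0 \<le> y \<and> y \<le> 1 - sum x S then y powr (\<alpha> i - 1) * ((1 - sum x S) - y) powr (\<beta> j0 - 1) else 0) \<partial>lborel)"
      by (rule nn_integral_cmult) measurable
    also have "\<dots> = ennreal (A x) * (if 0 \<le> 1 - sum x S then ennreal ((1 - sum x S) powr (\<alpha> i + \<beta> j0 - 1) * Beta (\<alpha> i) (\<beta> j0)) else 0)"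
      by (subst beta_nn[OF ai bj0]) simp
    also have "\<dots> = ennreal (Beta (\<alpha> i) (\<beta> j0) * dirf I col \<alpha> \<beta>' J x)"
      unfolding shift using Anonneg[of x] ai bj0
      by (auto simp: ennreal_mult'[symmetric] mult_ac Beta_def intro!: mult_nonneg_nonneg divide_nonneg_nonneg)
    finally show "(\<integral>\<^sup>+y. ennreal (dirf (insert i I) col \<alpha> \<beta> J (x(i:=y))) \<partial>lborel) = ennreal (Beta (\<alpha> i) (\<beta> j0) * dirf I col \<alpha> \<beta>' J x)" .
  qed
  also have "\<dots> = (\<integral>\<^sup>+x. ennreal (Beta (\<alpha> i) (\<beta> j0)) * ennreal (dirf I col \<alpha> \<beta>' J x) \<partial>PiM I (\<lambda>_. lborel))"
    using B0 by (intro nn_integral_cong) (simp add: ennreal_mult dirf_nonneg)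
  also have "\<dots> = ennreal (Beta (\<alpha> i) (\<beta> j0)) * (\<integral>\<^sup>+x. ennreal (dirf I col \<alpha> \<beta>' J x) \<partial>PiM I (\<lambda>_. lborel))"
    by (rule nn_integral_cmult) (intro measurable_compose[OF dirf_meas] measurable_ennreal insert.hyps)
  also have "(\<integral>\<^sup>+x. ennreal (dirf I col \<alpha> \<beta>' J x) \<partial>PiM I (\<lambda>_. lborel)) = ennreal (dirv I col \<alpha> \<beta>' J)"
    using insert.prems ai bj0 by (intro insert.IH) (auto simp: \<beta>'_def)
  also have "ennreal (Beta (\<alpha> i) (\<beta> j0)) * ennreal (dirv I col \<alpha> \<beta>' J) = ennreal (dirv (insert i I) col \<alpha> \<beta> J)"
  proof -
    have "dirv (insert i I) col \<alpha> \<beta> J = Beta (\<alpha> i) (\<beta> j0) * dirv I col \<alpha> \<beta>' J"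
    proof -
      define P where "P = (\<Prod>k\<in>S. Gamma (\<alpha> k))"
      define Q where "Q = (\<Prod>j\<in>J-{j0}. (\<Prod>i\<in>colset I col j. Gamma (\<alpha> i)) * Gamma (\<beta> j) / Gamma (sum \<alpha> (colset I col j) + \<beta> j))"
      have "dirv (insert i I) col \<alpha> \<beta> J = ((\<Prod>k\<in>insert i S. Gamma (\<alpha> k)) * Gamma (\<beta> j0) / Gamma (sum \<alpha> (insert i S) + \<beta> j0)) * Q"
        unfolding dirv_def Q_def using j0J insert.prems
        by (subst prod.remove[of J j0]) (auto simp: cs S_def intro!: prod.cong)
      also have "\<dots> = Gamma (\<alpha> i) * P * Gamma (\<beta> j0) / Gamma (\<alpha> i + sum \<alpha> S + \<beta> j0) * Q"
        using S by (simp add: P_def)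
      finally have L: "dirv (insert i I) col \<alpha> \<beta> J = Gamma (\<alpha> i) * P * Gamma (\<beta> j0) / Gamma (\<alpha> i + sum \<alpha> S + \<beta> j0) * Q" .
      have "dirv I col \<alpha> \<beta>' J = (P * Gamma (\<alpha> i + \<beta> j0) / Gamma (sum \<alpha> S + (\<alpha> i + \<beta> j0))) * Q"
        unfolding dirv_def Q_def P_def using j0J insert.prems
        by (subst prod.remove[of J j0]) (auto simp: S_def \<beta>'_def intro!: prod.cong)
      moreover have "Gamma (\<alpha> i + \<beta> j0) > 0" using ai bj0 by simp
      ultimately show ?thesis unfolding L Beta_def by (simp add: field_simps add_ac)
    qed
    moreover have "Beta (\<alpha> i) (\<beta> j0) \<ge> 0" using ai bj0 by (simp add: Beta_def)
    ultimately show ?thesis by (simp add: ennreal_mult')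
  qed
  finally show ?case .
qed


definition cnt :: "nat \<Rightarrow> (nat \<Rightarrow> nat) \<Rightarrow> (nat \<Rightarrow> nat) \<Rightarrow> nat \<Rightarrow> nat \<Rightarrow> nat" where
  "cnt t x y i j = card {k\<in>{1..t}. x k = i \<and> y k = j}"

lemma pcond_group:
  assumes "\<forall>k\<in>{1..t}. x k \<in> {1..a}" "\<forall>k\<in>{1..t}. y k \<in> {1..b}"
  shows "p_cond t x y \<theta> = (\<Prod>i\<in>{1..a}. \<Prod>j\<in>{1..b}. \<theta> i j ^ cnt t x y i j)"
proof -
  have "p_cond t x y \<theta> = (\<Prod>ij\<in>{1..a}\<times>{1..b}. \<Prod>k\<in>{k. k \<in> {1..t} \<and> (x k, y k) = ij}. \<theta> (x k) (y k))"
    unfolding p_cond_def using assms by (intro prod.group[symmetric]) auto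
  also have "\<dots> = (\<Prod>ij\<in>{1..a}\<times>{1..b}. \<theta> (fst ij) (snd ij) ^ cnt t x y (fst ij) (snd ij))"
  proof (intro prod.cong refl)
    fix ij :: "nat \<times> nat"
    have "(\<Prod>k\<in>{k. k \<in> {1..t} \<and> (x k, y k) = ij}. \<theta> (x k) (y k)) = (\<Prod>k\<in>{k. k \<in> {1..t} \<and> (x k, y k) = ij}. \<theta> (fst ij) (snd ij))"
      by (intro prod.cong) auto
    also have "\<dots> = \<theta> (fst ij) (snd ij) ^ cnt t x y (fst ij) (snd ij)"
      unfolding cnt_def by (simp add: prod_eq_iff)
    finally show "(\<Prod>k\<in>{k. k \<in> {1..t} \<and> (x k, y k) = ij}. \<theta> (x k) (y k)) = \<theta> (fst ij) (snd ij) ^ cnt t x y (fst ij) (snd ij)" .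
  qed
  also have "\<dots> = (\<Prod>i\<in>{1..a}. \<Prod>j\<in>{1..b}. \<theta> i j ^ cnt t x y i j)"
    unfolding prod.cartesian_product by (simp add: case_prod_unfold)
  finally show ?thesis .
qed

lemma colsum_theta:
  assumes "a \<ge> 1"
  shows "(\<Sum>i=1..a. theta_of a \<phi> i j) = 1"
proof -
  have "{1..a} = insert a {1..<a}" using assms by auto
  then have "(\<Sum>i=1..a. theta_of a \<phi> i j) = theta_of a \<phi> a j + (\<Sum>i\<in>{1..<a}. theta_of a \<phi> i j)"
    by simp
  also have "(\<Sum>i\<in>{1..<a}. theta_of a \<phi> i j) = (\<Sum>i\<in>{1..<a}. \<phi> (i, j))"
    by (intro sum.cong) (auto simp: theta_of_def)
  finally show ?thesis by (simp add: theta_of_def)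
qed

lemma Lambda_iff:
  assumes "a \<ge> 1"
  shows "theta_of a \<phi> \<in> Lambda a b \<longleftrightarrow> (\<forall>j\<in>{1..b}. \<forall>i\<in>{1..a}. 0 \<le> theta_of a \<phi> i j)"
proof
  assume h: "\<forall>j\<in>{1..b}. \<forall>i\<in>{1..a}. 0 \<le> theta_of a \<phi> i j"
  have "theta_of a \<phi> i j \<le> 1" if "i \<in> {1..a}" "j \<in> {1..b}" for i j
  proof -
    have "theta_of a \<phi> i j \<le> (\<Sum>i=1..a. theta_of a \<phi> i j)"
      using h that by (intro member_le_sum) auto
    then show ?thesis using colsum_theta[OF assms] by simp
  qed
  then show "theta_of a \<phi> \<in> Lambda a b" using h colsum_theta[OF assms] unfolding Lambda_def by auto
qed (auto simp: Lambda_def)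


lemma sqrt_prod: "sqrt (prod f A) = (\<Prod>x\<in>A. sqrt (f x))"
  by (induction A rule: infinite_finite_induct) (auto simp: real_sqrt_mult)

lemma pow_div_sqrt: "(z::real) \<ge> 0 \<Longrightarrow> z ^ m / sqrt z = z powr (real m - 1/2)"
proof (cases "z = 0")
  case False
  assume "z \<ge> 0"
  then have z: "z > 0" using False by simp
  then show ?thesis by (simp add: powr_diff powr_realpow powr_half_sqrt[symmetric])
qed simp

lemma colset_fc:
  "j \<in> {1..b} \<Longrightarrow> colset (free_coords a b) snd j = {1..<a} \<times> {j}"
  unfolding colset_def free_coords_def by auto

lemma colf_theta:
  assumes "a \<ge> 1"
  shows "colf ({1..<a} \<times> {j}) (\<lambda>ij. real (m (fst ij) (snd ij)) + 1/2) (real (m a j) + 1/2) \<phi>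
    = (if \<forall>i\<in>{1..a}. 0 \<le> theta_of a \<phi> i j then (\<Prod>i\<in>{1..a}. theta_of a \<phi> i j powr (real (m i j) - 1/2)) else 0)"
proof -
  have inj: "inj_on (\<lambda>i. (i, j)) {1..<a}" by (auto simp: inj_on_def)
  have img: "{1..<a} \<times> {j} = (\<lambda>i. (i, j)) ` {1..<a}" by auto
  have s: "sum \<phi> ({1..<a} \<times> {j}) = (\<Sum>i\<in>{1..<a}. \<phi> (i, j))"
    unfolding img by (subst sum.reindex[OF inj]) simp
  have ta: "theta_of a \<phi> a j = 1 - (\<Sum>i\<in>{1..<a}. \<phi> (i, j))" by (simp add: theta_of_def)
  have ti: "theta_of a \<phi> i j = \<phi> (i, j)" if "i \<in> {1..<a}" for i using that by (simp add: theta_of_def)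
  have p: "(\<Prod>ij\<in>{1..<a} \<times> {j}. \<phi> ij powr (real (m (fst ij) (snd ij)) + 1/2 - 1))
      = (\<Prod>i\<in>{1..<a}. theta_of a \<phi> i j powr (real (m i j) - 1/2))"
    unfolding img by (subst prod.reindex[OF inj]) (auto intro!: prod.cong simp: ti)
  have c: "(\<forall>ij\<in>{1..<a} \<times> {j}. 0 \<le> \<phi> ij) = (\<forall>i\<in>{1..<a}. 0 \<le> theta_of a \<phi> i j)"
    using ti by auto
  have ins: "{1..a} = insert a {1..<a}" using assms by auto
  have e1: "(\<forall>i\<in>{1..a}. 0 \<le> theta_of a \<phi> i j) = ((\<forall>i\<in>{1..<a}. 0 \<le> theta_of a \<phi> i j) \<and> 0 \<le> theta_of a \<phi> a j)"
    unfolding ins by auto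
  have e2: "(\<Prod>i\<in>{1..a}. theta_of a \<phi> i j powr (real (m i j) - 1/2)) =
     theta_of a \<phi> a j powr (real (m a j) - 1/2) * (\<Prod>i\<in>{1..<a}. theta_of a \<phi> i j powr (real (m i j) - 1/2))"
    unfolding ins by simp
  show ?thesis unfolding colf_def s p c e1 e2 using ta by (auto simp: mult_ac)
qed

lemma pointwise:
  assumes "a \<ge> 1"
  shows "jeffreys_density a b (theta_of a \<phi>) * (\<Prod>i\<in>{1..a}. \<Prod>j\<in>{1..b}. theta_of a \<phi> i j ^ m i j)
    = dirf (free_coords a b) snd (\<lambda>ij. real (m (fst ij) (snd ij)) + 1/2) (\<lambda>j. real (m a j) + 1/2) {1..b} \<phi>"
proof -
  define \<theta> where "\<theta> = theta_of a \<phi>"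
  have R: "dirf (free_coords a b) snd (\<lambda>ij. real (m (fst ij) (snd ij)) + 1/2) (\<lambda>j. real (m a j) + 1/2) {1..b} \<phi>
     = (\<Prod>j\<in>{1..b}. if \<forall>i\<in>{1..a}. 0 \<le> \<theta> i j then (\<Prod>i\<in>{1..a}. \<theta> i j powr (real (m i j) - 1/2)) else 0)"
    unfolding dirf_def \<theta>_def by (intro prod.cong refl) (simp only: colset_fc colf_theta[OF assms])
  show ?thesis
  proof (cases "\<theta> \<in> Lambda a b")
    case True
    then have nn: "\<forall>j\<in>{1..b}. \<forall>i\<in>{1..a}. 0 \<le> \<theta> i j" using Lambda_iff[OF assms] \<theta>_def by simp
    have "jeffreys_density a b \<theta> * (\<Prod>i\<in>{1..a}. \<Prod>j\<in>{1..b}. \<theta> i j ^ m i j)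
       = (\<Prod>i\<in>{1..a}. \<Prod>j\<in>{1..b}. \<theta> i j ^ m i j) / (\<Prod>i\<in>{1..a}. \<Prod>j\<in>{1..b}. sqrt (\<theta> i j))"
      using True unfolding jeffreys_density_def by (simp add: sqrt_prod)
    also have "\<dots> = (\<Prod>i\<in>{1..a}. \<Prod>j\<in>{1..b}. \<theta> i j ^ m i j / sqrt (\<theta> i j))"
      by (simp add: prod_dividef)
    also have "\<dots> = (\<Prod>i\<in>{1..a}. \<Prod>j\<in>{1..b}. \<theta> i j powr (real (m i j) - 1/2))"
      using nn by (intro prod.cong refl) (simp add: pow_div_sqrt)
    also have "\<dots> = (\<Prod>j\<in>{1..b}. \<Prod>i\<in>{1..a}. \<theta> i j powr (real (m i j) - 1/2))"
      by (rule prod.swap)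
    finally show ?thesis unfolding R using nn \<theta>_def by simp
  next
    case False
    then obtain j i where ji: "j \<in> {1..b}" "i \<in> {1..a}" "\<not> 0 \<le> \<theta> i j"
      using Lambda_iff[OF assms] \<theta>_def by auto
    have "dirf (free_coords a b) snd (\<lambda>ij. real (m (fst ij) (snd ij)) + 1/2) (\<lambda>j. real (m a j) + 1/2) {1..b} \<phi> = 0"
      unfolding R using ji by (intro prod_zero) (auto intro!: bexI[of _ j])
    then show ?thesis using False unfolding jeffreys_density_def \<theta>_def by simp
  qed
qed


definition Gcol :: "nat \<Rightarrow> (nat \<Rightarrow> nat \<Rightarrow> nat) \<Rightarrow> nat \<Rightarrow> real" where
  "Gcol a m j = (\<Prod>i\<in>{1..a}. Gamma (real (m i j) + 1/2)) / Gamma (real (\<Sum>i\<in>{1..a}. m i j) + real a / 2)"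

lemma Gcol_pos: "a \<ge> 1 \<Longrightarrow> Gcol a m j > 0"
  unfolding Gcol_def by (intro divide_pos_pos prod_pos Gamma_real_pos) (auto intro!: add_nonneg_pos sum_nonneg)

lemma dirv_eq:
  assumes "a \<ge> 1"
  shows "dirv (free_coords a b) snd (\<lambda>ij. real (m (fst ij) (snd ij)) + 1/2) (\<lambda>j. real (m a j) + 1/2) {1..b}
     = (\<Prod>j\<in>{1..b}. Gcol a m j)"
  unfolding dirv_def
proof (intro prod.cong refl)
  fix j assume j: "j \<in> {1..b}"
  have inj: "inj_on (\<lambda>i. (i, j)) {1..<a}" by (auto simp: inj_on_def)
  have img: "{1..<a} \<times> {j} = (\<lambda>i. (i, j)) ` {1..<a}" by auto
  have ins: "{1..a} = insert a {1..<a}" using assms by auto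
  have p: "(\<Prod>ij\<in>{1..<a} \<times> {j}. Gamma (real (m (fst ij) (snd ij)) + 1/2)) = (\<Prod>i\<in>{1..<a}. Gamma (real (m i j) + 1/2))"
    unfolding img by (subst prod.reindex[OF inj]) simp
  have s: "(\<Sum>ij\<in>{1..<a} \<times> {j}. real (m (fst ij) (snd ij)) + 1/2) = (\<Sum>i\<in>{1..<a}. real (m i j)) + real (a - 1) / 2"
    unfolding img by (subst sum.reindex[OF inj]) (simp add: sum.distrib)
  have s2: "real (\<Sum>i\<in>{1..a}. m i j) + real a / 2 = (\<Sum>i\<in>{1..<a}. real (m i j)) + real (a - 1) / 2 + (real (m a j) + 1/2)"
    unfolding ins using assms by (simp add: of_nat_diff field_simps)
  show "(\<Prod>i\<in>colset (free_coords a b) snd j. Gamma (real (m (fst i) (snd i)) + 1 / 2)) * Gamma (real (m a j) + 1 / 2) /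
        Gamma ((\<Sum>i\<in>colset (free_coords a b) snd j. real (m (fst i) (snd i)) + 1 / 2) + (real (m a j) + 1 / 2)) =
        Gcol a m j"
  proof -
    have "(\<Prod>i\<in>colset (free_coords a b) snd j. Gamma (real (m (fst i) (snd i)) + 1 / 2)) * Gamma (real (m a j) + 1 / 2) /
        Gamma ((\<Sum>i\<in>colset (free_coords a b) snd j. real (m (fst i) (snd i)) + 1 / 2) + (real (m a j) + 1 / 2))
      = (\<Prod>i\<in>{1..<a}. Gamma (real (m i j) + 1/2)) * Gamma (real (m a j) + 1 / 2) /
        Gamma ((\<Sum>i\<in>{1..<a}. real (m i j)) + real (a - 1) / 2 + (real (m a j) + 1 / 2))"
      unfolding colset_fc[OF j] p s ..
    also have "\<dots> = Gcol a m j" unfolding Gcol_def s2 unfolding ins by (simp add: mult_ac)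
    finally show ?thesis .
  qed
qed

lemma integral_dirf:
  assumes "a \<ge> 1"
  shows "(\<integral>\<phi>. jeffreys_density a b (theta_of a \<phi>) * (\<Prod>i\<in>{1..a}. \<Prod>j\<in>{1..b}. theta_of a \<phi> i j ^ m i j) \<partial>param_measure a b)
     = (\<Prod>j\<in>{1..b}. Gcol a m j)"
proof -
  let ?\<alpha> = "\<lambda>ij. real (m (fst ij) (snd ij)) + 1/2" and ?\<beta> = "\<lambda>j. real (m a j) + 1/2"
  have fin: "finite (free_coords a b)" by (simp add: free_coords_def)
  have "(\<integral>\<phi>. jeffreys_density a b (theta_of a \<phi>) * (\<Prod>i\<in>{1..a}. \<Prod>j\<in>{1..b}. theta_of a \<phi> i j ^ m i j) \<partial>param_measure a b)
      = (\<integral>\<phi>. dirf (free_coords a b) snd ?\<alpha> ?\<beta> {1..b} \<phi> \<partial>param_measure a b)"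
    by (rule Bochner_Integration.integral_cong[OF refl]) (rule pointwise[OF assms])
  also have "\<dots> = enn2real (\<integral>\<^sup>+\<phi>. ennreal (dirf (free_coords a b) snd ?\<alpha> ?\<beta> {1..b} \<phi>) \<partial>param_measure a b)"
    unfolding param_measure_def
    by (intro integral_eq_nn_integral dirf_meas fin AE_I2 dirf_nonneg)
  also have "(\<integral>\<^sup>+\<phi>. ennreal (dirf (free_coords a b) snd ?\<alpha> ?\<beta> {1..b} \<phi>) \<partial>param_measure a b)
      = ennreal (dirv (free_coords a b) snd ?\<alpha> ?\<beta> {1..b})"
    unfolding param_measure_def
    by (intro dir fin) (auto simp: free_coords_def add_pos_nonneg)
  also have "dirv (free_coords a b) snd ?\<alpha> ?\<beta> {1..b} = (\<Prod>j\<in>{1..b}. Gcol a m j)"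
    by (rule dirv_eq[OF assms])
  finally show ?thesis using Gcol_pos[OF assms] by (simp add: less_imp_le prod_nonneg)
qed

lemma pU_eq:
  assumes "a \<ge> 1" "\<forall>k\<in>{1..t}. x k \<in> {1..a}" "\<forall>k\<in>{1..t}. y k \<in> {1..b}"
  shows "p_U a b t x y = (\<Prod>j\<in>{1..b}. Gcol a (cnt t x y) j / Gcol a (\<lambda>_ _. 0) j)"
proof -
  have num: "(\<integral>\<phi>. jeffreys_density a b (theta_of a \<phi>) * p_cond t x y (theta_of a \<phi>) \<partial>param_measure a b)
      = (\<Prod>j\<in>{1..b}. Gcol a (cnt t x y) j)"
    using integral_dirf[OF assms(1), of b "cnt t x y"] by (simp add: pcond_group[OF assms(2,3)])
  have den: "(\<integral>\<phi>. jeffreys_density a b (theta_of a \<phi>) \<partial>param_measure a b)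
      = (\<Prod>j\<in>{1..b}. Gcol a (\<lambda>_ _. 0) j)"
    using integral_dirf[OF assms(1), of b "\<lambda>_ _. 0"] by simp
  show ?thesis unfolding p_U_def num den by (simp add: prod_dividef)
qed

lemma gibbs:
  fixes \<theta> :: "'a \<Rightarrow> real" and n :: "'a \<Rightarrow> nat"
  assumes A: "finite A" and nn: "\<forall>i\<in>A. 0 \<le> \<theta> i" and s: "sum \<theta> A \<le> 1"
  shows "(\<Prod>i\<in>A. \<theta> i ^ n i) \<le> (\<Prod>i\<in>A. (real (n i) / real (sum n A)) ^ n i)"
proof -
  define B where "B = {i\<in>A. n i > 0}"
  have BA: "B \<subseteq> A" and fB: "finite B" using A by (auto simp: B_def)
  have L: "(\<Prod>i\<in>A. \<theta> i ^ n i) = (\<Prod>i\<in>B. \<theta> i ^ n i)"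
    using A by (intro prod.mono_neutral_right) (auto simp: B_def)
  have R: "(\<Prod>i\<in>A. (real (n i) / real (sum n A)) ^ n i) = (\<Prod>i\<in>B. (real (n i) / real (sum n A)) ^ n i)"
    using A by (intro prod.mono_neutral_right) (auto simp: B_def)
  have N: "sum n A = sum n B"
    using A by (intro sum.mono_neutral_right) (auto simp: B_def)
  define N where "N = real (sum n B)"
  have Rnn: "0 \<le> (\<Prod>i\<in>B. (real (n i) / N) ^ n i)" unfolding N_def by (intro prod_nonneg zero_le_power divide_nonneg_nonneg) (auto intro: sum_nonneg)
  show ?thesis
  proof (cases "\<exists>i\<in>B. \<theta> i = 0")
    case True
    then have "(\<Prod>i\<in>B. \<theta> i ^ n i) = 0" using fB by (auto simp: B_def intro!: prod_zero)
    then show ?thesis unfolding L R unfolding N using Rnn N_def by simp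
  next
    case False
    then have tp: "\<forall>i\<in>B. \<theta> i > 0" using nn BA by force
    show ?thesis
    proof (cases "B = {}")
      case True then show ?thesis unfolding L R by simp
    next
      case False
      have Npos: "N > 0"
      proof -
        obtain i where i: "i \<in> B" using False by auto
        have "n i \<le> sum n B" using fB i by (intro member_le_sum) auto
        moreover have "n i > 0" using i by (simp add: B_def)
        ultimately have "sum n B > 0" by simp
        then show ?thesis unfolding N_def by (simp only: of_nat_0_less_iff)
      qed
      have "ln (\<Prod>i\<in>B. \<theta> i ^ n i) - ln (\<Prod>i\<in>B. (real (n i) / N) ^ n i)
          = (\<Sum>i\<in>B. real (n i) * ln (\<theta> i * N / real (n i)))"
      proof -
        have l1: "ln (\<Prod>i\<in>B. \<theta> i ^ n i) = (\<Sum>i\<in>B. real (n i) * ln (\<theta> i))"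
          using fB tp by (subst ln_prod) (auto simp: ln_realpow)
        have l2: "ln (\<Prod>i\<in>B. (real (n i) / N) ^ n i) = (\<Sum>i\<in>B. real (n i) * (ln (real (n i)) - ln N))"
          using fB Npos by (subst ln_prod) (auto simp: ln_realpow B_def ln_div)
        have l3: "ln (\<theta> i * N / real (n i)) = ln (\<theta> i) + ln N - ln (real (n i))" if "i \<in> B" for i
          using tp that Npos by (auto simp: ln_div ln_mult B_def)
        have "(\<Sum>i\<in>B. real (n i) * ln (\<theta> i)) - (\<Sum>i\<in>B. real (n i) * (ln (real (n i)) - ln N))
            = (\<Sum>i\<in>B. real (n i) * ln (\<theta> i) - real (n i) * (ln (real (n i)) - ln N))"
          by (simp add: sum_subtractf)
        also have "\<dots> = (\<Sum>i\<in>B. real (n i) * ln (\<theta> i * N / real (n i)))"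
          by (intro sum.cong refl, subst l3, assumption, simp add: algebra_simps)
        finally show ?thesis unfolding l1 l2 .
      qed
      also have "\<dots> \<le> (\<Sum>i\<in>B. real (n i) * (\<theta> i * N / real (n i) - 1))"
        using tp Npos by (intro sum_mono mult_left_mono ln_le_minus_one) (auto simp: B_def)
      also have "\<dots> = N * sum \<theta> B - N"
      proof -
        have "(\<Sum>i\<in>B. real (n i) * (\<theta> i * N / real (n i) - 1)) = (\<Sum>i\<in>B. \<theta> i * N - real (n i))"
          by (intro sum.cong refl) (auto simp: B_def field_simps)
        also have "\<dots> = N * sum \<theta> B - N"
          by (simp add: sum_subtractf sum_distrib_right[symmetric] N_def mult.commute)
        finally show ?thesis .
      qed
      also have "sum \<theta> B \<le> sum \<theta> A" using A BA nn by (intro sum_mono2) auto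
      then have "sum \<theta> B \<le> 1" using s by simp
      then have "N * sum \<theta> B - N \<le> 0" using Npos by (simp add: mult_le_cancel_left1)
      finally have "ln (\<Prod>i\<in>B. \<theta> i ^ n i) \<le> ln (\<Prod>i\<in>B. (real (n i) / N) ^ n i)" by simp
      moreover have "(\<Prod>i\<in>B. \<theta> i ^ n i) > 0" using tp by (intro prod_pos) auto
      moreover have "(\<Prod>i\<in>B. (real (n i) / N) ^ n i) > 0" using Npos by (intro prod_pos) (auto simp: B_def)
      ultimately show ?thesis unfolding L R unfolding N N_def[symmetric] by simp
    qed
  qed
qed

lemma D1:
  fixes y :: real assumes "y \<ge> 0" shows "2*y/(2+y) \<le> ln (1+y)"
proof -
  let ?f = "\<lambda>z::real. ln (1+z) - 2*z/(2+z)"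
  have "?f 0 \<le> ?f y"
  proof (rule DERIV_nonneg_imp_increasing_open[OF assms])
    fix z :: real assume z: "0 < z" "z < y"
    have "(?f has_real_derivative (1/(1+z) - 4/(2+z)^2)) (at z)"
      using z by (auto intro!: derivative_eq_intros simp: field_simps power2_eq_square)
    moreover have "1/(1+z) - 4/(2+z)^2 \<ge> 0"
    proof -
      have "1/(1+z) - 4/(2+z)^2 = (1 * (2+z)^2 - 4 * (1+z)) / ((1+z) * (2+z)^2)"
        using z by (subst diff_frac_eq) auto
      also have "1 * (2+z)^2 - 4 * (1+z) = z^2" by (simp add: power2_eq_square algebra_simps)
      finally show ?thesis using z by simp
    qed
    ultimately show "\<exists>d. (?f has_real_derivative d) (at z) \<and> d \<ge> 0" by blast
  next
    show "continuous_on {0..y} ?f" by (intro continuous_intros) auto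
  qed
  then show ?thesis by simp
qed

lemma D2:
  fixes y :: real assumes "y \<ge> 0" shows "ln (1+y) \<le> y - y^2/2 + y^3/3"
proof -
  let ?f = "\<lambda>z::real. z - z^2/2 + z^3/3 - ln (1+z)"
  have "?f 0 \<le> ?f y"
  proof (rule DERIV_nonneg_imp_increasing_open[OF assms])
    fix z :: real assume z: "0 < z" "z < y"
    have "(?f has_real_derivative (1 - z + z^2 - 1/(1+z))) (at z)"
      using z by (auto intro!: derivative_eq_intros simp: field_simps power2_eq_square)
    moreover have "1 - z + z^2 - 1/(1+z) \<ge> 0"
    proof -
      have "1 - z + z^2 - 1/(1+z) = ((1 - z + z^2) * (1+z) - 1) / (1+z)"
        using z by (simp add: field_simps)
      also have "(1 - z + z^2) * (1+z) - 1 = z^3" by (simp add: power2_eq_square power3_eq_cube algebra_simps)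
      finally show ?thesis using z by simp
    qed
    ultimately show "\<exists>d. (?f has_real_derivative d) (at z) \<and> d \<ge> 0" by blast
  next
    show "continuous_on {0..y} ?f" by (intro continuous_intros) auto
  qed
  then show ?thesis by simp
qed


lemma A1:
  fixes m :: real assumes m: "m \<ge> 1"
  shows "1 \<le> (m + 1/2) * (ln (m+1) - ln m)"
proof -
  have "ln (m+1) - ln m = ln (1 + 1/m)"
  proof -
    have "1 + 1/m = (m+1)/m" using m by (simp add: field_simps)
    then show ?thesis using m by (simp add: ln_divide_pos)
  qed
  moreover have "2*(1/m)/(2+1/m) \<le> ln (1 + 1/m)" using m by (intro D1) auto
  moreover have "(m + 1/2) * (2*(1/m)/(2+1/m)) = 1" using m by (simp add: field_simps)
  moreover have "(m + 1/2) * (2*(1/m)/(2+1/m)) \<le> (m + 1/2) * ln (1 + 1/m)"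
    using calculation(2) m by (intro mult_left_mono) auto
  ultimately show ?thesis using m by (simp split: if_splits)
qed

lemma A2:
  fixes m :: real assumes m: "m \<ge> 1"
  shows "(m + 1/2) * (ln (m+1) - ln m) \<le> 1 + 1/(2*m) - 1/(2*(m+1))"
proof -
  have "ln (m+1) - ln m = ln (1 + 1/m)"
  proof -
    have "1 + 1/m = (m+1)/m" using m by (simp add: field_simps)
    then show ?thesis using m by (simp add: ln_divide_pos)
  qed
  moreover have "ln (1 + 1/m) \<le> 1/m - (1/m)^2/2 + (1/m)^3/3" using m by (intro D2) auto
  moreover have "(m + 1/2) * (1/m - (1/m)^2/2 + (1/m)^3/3) \<le> 1 + 1/(2*m) - 1/(2*(m+1))"
  proof -
    have "(m + 1/2) * (1/m - (1/m)^2/2 + (1/m)^3/3) = 1 + 1/(12*m^2) + 1/(6*m^3)"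
      using m by (simp add: field_simps power2_eq_square power3_eq_cube)
    moreover have "1/(2*m) - 1/(2*(m+1)) = 1/(2*m*(m+1))" using m by (simp add: field_simps)
    moreover have "1/(12*m^2) + 1/(6*m^3) \<le> 1/(2*m*(m+1))"
    proof -
      have key: "(m+2)*(2*m*(m+1)) \<le> 12*m^3"
      proof -
        have "m*(m*m) \<ge> m*m" "m*m \<ge> m" using m by (simp_all add: mult_le_cancel_left1)
        then show ?thesis by (simp add: power3_eq_cube algebra_simps)
      qed
      have e: "1/(12*m^2) + 1/(6*m^3) = (m+2)/(12*m^3)" using m by (simp add: field_simps power2_eq_square power3_eq_cube)
      have p1: "0 < 12*m^3" and p2: "0 < 2*m*(m+1)" using m by auto
      have "(m+2) \<le> 12*m^3 / (2*m*(m+1))" using key p2 by (simp add: pos_le_divide_eq mult_ac)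
      also have "\<dots> = 1/(2*m*(m+1)) * (12*m^3)" by simp
      finally have "(m+2)/(12*m^3) \<le> 1/(2*m*(m+1))" using p1 by (simp add: pos_divide_le_eq)
      then show ?thesis using e by simp
    qed
    ultimately show ?thesis by simp
  qed
  moreover have "(m + 1/2) * ln (1 + 1/m) \<le> (m + 1/2) * (1/m - (1/m)^2/2 + (1/m)^3/3)"
    using calculation(2) m by (intro mult_left_mono) auto
  ultimately show ?thesis by simp
qed

lemma fact_upper:
  fixes n :: nat assumes "n \<ge> 1"
  shows "ln (fact n) \<le> 1 + (real n + 1/2) * ln (real n) - real n"
  using assms
proof (induction n rule: dec_induct)
  case base then show ?case by simp
next
  case (step n)
  have n: "real n \<ge> 1" using step by simp
  have "ln (fact (Suc n)) = ln (fact n) + ln (real n + 1)"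
    by (simp add: ln_mult add.commute)
  also have "\<dots> \<le> 1 + (real n + 1/2) * ln (real n) - real n + ln (real n + 1)"
    using step.IH by simp
  also have "\<dots> \<le> 1 + (real (Suc n) + 1/2) * ln (real (Suc n)) - real (Suc n)"
    using A1[OF n] by (simp add: algebra_simps)
  finally show ?case .
qed

lemma fact_lower:
  fixes n :: nat assumes "n \<ge> 1"
  shows "1/2 + 1/(2 * real n) + (real n + 1/2) * ln (real n) - real n \<le> ln (fact n)"
  using assms
proof (induction n rule: dec_induct)
  case base then show ?case by simp
next
  case (step n)
  have n: "real n \<ge> 1" using step by simp
  have "ln (fact (Suc n)) = ln (fact n) + ln (real n + 1)"
    by (simp add: ln_mult add.commute)
  moreover have "1/2 + 1/(2 * real n) + (real n + 1/2) * ln (real n) - real n + ln (real n + 1) \<le> ln (fact n) + ln (real n + 1)"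
    using step.IH by simp
  moreover have "1/2 + 1/(2 * real (Suc n)) + (real (Suc n) + 1/2) * ln (real (Suc n)) - real (Suc n)
      \<le> 1/2 + 1/(2 * real n) + (real n + 1/2) * ln (real n) - real n + ln (real n + 1)"
    using A2[OF n] by (simp add: algebra_simps)
  ultimately show ?case by linarith
qed


lemma lnGamma_mid:
  fixes x y :: real assumes "x > 0" "y > 0"
  shows "ln (Gamma ((x+y)/2)) \<le> (ln (Gamma x) + ln (Gamma y))/2"
proof -
  have "(ln \<circ> Gamma) ((1 - 1/2) *\<^sub>R x + (1/2) *\<^sub>R y) \<le> (1 - 1/2) * (ln \<circ> Gamma) x + (1/2) * (ln \<circ> Gamma) y"
    using assms by (intro convex_onD[OF log_convex_Gamma_real]) auto
  moreover have "(1 - 1/2) *\<^sub>R x + (1/2) *\<^sub>R y = (x+y)/2" by simp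
  ultimately show ?thesis by (simp add: add_divide_distrib)
qed

lemma e_ge: "5/2 \<le> exp (1::real)"
  using exp_lower_Taylor_quadratic[of 1] by simp

lemma lnGamma_half_lower:
  fixes n :: nat
  shows "ln (5/4) + real n * ln (real n) - real n \<le> ln (Gamma (real n + 1/2))"
proof (cases "n = 0")
  case True
  have "5/4 \<le> sqrt pi"
  proof -
    have "(5/4::real)^2 = 25/16" by (simp add: power2_eq_square)
    then have "(5/4)^2 \<le> pi" using pi_gt3 by simp
    then show ?thesis by (rule real_le_rsqrt)
  qed
  then show ?thesis using True by (simp add: Gamma_one_half_real)
next
  case False
  then have n: "real n \<ge> 1" by simp
  have g: "Gamma (real n + 1/2) > 0" by (intro Gamma_real_pos) simp
  have h1: "ln (fact n) \<le> (ln (Gamma (real n + 1/2)) + ln (Gamma (real n + 3/2)))/2"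
  proof -
    have "ln (Gamma ((real n + 1/2 + (real n + 3/2))/2)) \<le> (ln (Gamma (real n + 1/2)) + ln (Gamma (real n + 3/2)))/2"
      by (intro lnGamma_mid) auto
    moreover have "(real n + 1/2 + (real n + 3/2))/2 = 1 + real n" by simp
    ultimately have "ln (Gamma (1 + real n)) \<le> (ln (Gamma (real n + 1/2)) + ln (Gamma (real n + 3/2)))/2"
      by metis
    then show ?thesis by (simp only: Gamma_fact)
  qed
  have h2: "Gamma (real n + 3/2) = (real n + 1/2) * Gamma (real n + 1/2)"
  proof -
    have "Gamma (real n + 1/2 + 1) = (real n + 1/2) * Gamma (real n + 1/2)"
      by (intro Gamma_plus1) (auto dest!: nonpos_Ints_nonpos)
    moreover have "real n + 1/2 + 1 = real n + 3/2" by simp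
    ultimately show ?thesis by simp
  qed
  have h3: "ln ((real n + 1/2) * Gamma (real n + 1/2)) = ln (real n + 1/2) + ln (Gamma (real n + 1/2))"
    using g by (intro ln_mult_pos) auto
  have h4: "1/2 + 1/(2 * real n) + (real n + 1/2) * ln (real n) - real n \<le> ln (fact n)"
    using fact_lower[of n] False by simp
  have h5: "ln (real n + 1/2) - ln (real n) \<le> ln (3/2)"
  proof -
    have "ln (real n + 1/2) - ln (real n) = ln ((real n + 1/2) / real n)" using n by (simp add: ln_divide_pos)
    also have "\<dots> \<le> ln (3/2)" using n by (intro ln_mono) (auto simp: field_simps)
    finally show ?thesis .
  qed
  have h6: "ln (3/2) + 2 * ln (5/4) \<le> (1::real)"
  proof -
    have "ln (3/2) + 2 * ln (5/4) = ln ((3/2) * (5/4)^2 :: real)" by (subst ln_mult_pos) (auto simp: ln_realpow simp del: ln_le_cancel_iff)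
    also have "\<dots> \<le> ln (exp 1)" using e_ge by (intro ln_mono) (auto simp: power2_eq_square)
    finally show ?thesis by simp
  qed
  have h7: "0 \<le> 1/(2 * real n)" by simp
  have h8: "ln (Gamma (real n + 3/2)) = ln (real n + 1/2) + ln (Gamma (real n + 1/2))"
    using h2 h3 by simp
  have h4': "1/2 + 1/(2 * real n) + real n * ln (real n) + ln (real n) / 2 - real n \<le> ln (fact n)"
    using h4 by (simp add: algebra_simps)
  show ?thesis using h1 h4' h5 h6 h7 h8 by argo
qed

lemma lnGamma_half_upper:
  fixes m :: nat assumes "m \<ge> 1"
  shows "ln (Gamma (real m + 1/2)) \<le> 1 + real m * ln (real m) - real m"
proof -
  have m: "real m \<ge> 1" using assms by simp
  have e: "(real m + (real m + 1))/2 = real m + 1/2" by simp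
  have "ln (Gamma ((real m + (real m + 1))/2)) \<le> (ln (Gamma (real m)) + ln (Gamma (real m + 1)))/2"
    using m by (intro lnGamma_mid) auto
  then have "ln (Gamma (real m + 1/2)) \<le> (ln (Gamma (real m)) + ln (Gamma (real m + 1)))/2"
    unfolding e .
  moreover have "Gamma (real m + 1) = real m * Gamma (real m)"
    using m by (intro Gamma_plus1) (auto dest!: nonpos_Ints_nonpos)
  moreover have "Gamma (real m) > 0" using m by simp
  moreover have "Gamma (real m + 1) = fact m" using Gamma_fact[of m] by (simp add: add.commute)
  ultimately have h1: "ln (Gamma (real m + 1/2)) \<le> (ln (Gamma (real m)) + ln (fact m))/2"
    and h2: "ln (fact m) = ln (real m) + ln (Gamma (real m))"
    using m by (auto simp: ln_mult_pos)
  have "ln (fact m) \<le> 1 + (real m + 1/2) * ln (real m) - real m" by (rule fact_upper[OF assms])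
  then show ?thesis using h1 h2 by (simp add: algebra_simps)
qed

lemma keyK:
  fixes N c :: real assumes N: "N \<ge> 1" and c: "c \<ge> 0"
  shows "(N+c) * ln (N+c) - (N+c) \<le> N * ln N - N + c * ln N + c * ln (1+c)"
proof -
  have "ln (N+c) = ln N + ln (1 + c/N)"
  proof -
    have "N + c = N * (1 + c/N)" using N by (simp add: field_simps)
    then show ?thesis using N c by (simp add: ln_mult_pos add_pos_nonneg)
  qed
  moreover have "ln (1 + c/N) \<le> c/N" using N c by (intro ln_add_one_self_le_self) auto
  moreover have "ln (N+c) \<le> ln N + ln (1+c)"
  proof -
    have "N + c \<le> N * (1+c)" using N c by (simp add: algebra_simps mult_le_cancel_right1)
    then have "ln (N+c) \<le> ln (N * (1+c))" using N c by (intro ln_mono) auto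
    then show ?thesis using N c by (simp add: ln_mult_pos)
  qed
  ultimately have "N * ln (N+c) \<le> N * ln N + c" and "c * ln (N+c) \<le> c * (ln N + ln (1+c))"
    using N c by (auto intro!: mult_left_mono simp: algebra_simps field_simps)
  then show ?thesis by (simp add: algebra_simps)
qed


lemma lnGamma_upper:
  fixes N a :: nat assumes N1: "N \<ge> 1" and a2: "a \<ge> 2"
  shows "ln (Gamma (real N + real a / 2)) \<le>
     1 + ((real a - 1)/2) * ln (1 + (real a - 1)/2) + real N * ln (real N) - real N + ((real a - 1)/2) * ln (real N)"
proof (cases "even a")
  case False
  then obtain k where k: "a = 2*k+1" by (metis oddE)
  have k1: "k \<ge> 1" using k a2 by simp
  have e1: "real N + real a / 2 = real (N + k) + 1/2" using k by simp
  have e2: "(real a - 1)/2 = real k" using k by simp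
  have "ln (Gamma (real N + real a / 2)) \<le> 1 + real (N+k) * ln (real (N+k)) - real (N+k)"
    unfolding e1 using N1 by (intro lnGamma_half_upper) simp
  also have "\<dots> \<le> 1 + (real N * ln (real N) - real N + real k * ln (real N) + real k * ln (1 + real k))"
    using keyK[of "real N" "real k"] N1 by simp
  finally show ?thesis unfolding e2 by simp
next
  case True
  then obtain k where k: "a = 2*k" by (metis evenE)
  have k1: "k \<ge> 1" using k a2 by simp
  define M where "M = N + k - 1"
  have M1: "M \<ge> 1" using N1 k1 by (simp add: M_def)
  have rM: "real M = real N + (real k - 1)" using N1 k1 by (simp add: M_def of_nat_diff)
  have e1: "real N + real a / 2 = 1 + real M" using k rM by simp
  have e2: "(real a - 1)/2 = real k - 1/2" using k by simp
  have f1: "ln (Gamma (real N + real a / 2)) = ln (fact M)" unfolding e1 by (simp add: Gamma_fact)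
  have f2: "ln (fact M) \<le> 1 + (real M + 1/2) * ln (real M) - real M" by (rule fact_upper[OF M1])
  have f3: "(real M + 1/2) * ln (real M) - real M = (real M * ln (real M) - real M) + ln (real M) / 2" by (simp add: algebra_simps)
  have f4: "real M * ln (real M) - real M \<le> real N * ln (real N) - real N + (real k - 1) * ln (real N) + (real k - 1) * ln (1 + (real k - 1))"
    unfolding rM using keyK[of "real N" "real k - 1"] N1 k1 by simp
  have f5: "ln (real M) \<le> ln (real N) + ln (real k)"
  proof -
    have "real M \<le> real N * real k"
    proof -
      have "(real N - 1) * (real k - 1) \<ge> 0" using N1 k1 by simp
      then show ?thesis unfolding rM by (simp add: algebra_simps)
    qed
    then have "ln (real M) \<le> ln (real N * real k)" using M1 by (intro ln_mono) auto
    then show ?thesis using N1 k1 by (simp add: ln_mult_pos)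
  qed
  have f6: "(real k - 1) * ln (1 + (real k - 1)) = (real k - 1) * ln (real k)" by simp
  have A: "ln (Gamma (real N + real a / 2)) \<le> 1 + (real N * ln (real N) - real N + (real k - 1/2) * ln (real N) + (real k - 1/2) * ln (real k))"
  proof -
    have "(real k - 1/2) * ln (real N) = (real k - 1) * ln (real N) + ln (real N) / 2"
      "(real k - 1/2) * ln (real k) = (real k - 1) * ln (real k) + ln (real k) / 2"
      by (simp_all add: algebra_simps)
    then show ?thesis using f1 f2 f3 f4 f5 f6 by linarith
  qed
  have "(real k - 1/2) * ln (real k) \<le> (real k - 1/2) * ln (1 + (real k - 1/2))"
    using k1 by (intro mult_left_mono ln_mono) auto
  then show ?thesis using A unfolding e2 by (simp add: algebra_simps)
qed


lemma ln_2pi_le: "ln (2 * pi) \<le> 25/12"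
proof -
  have "ln (2 * pi) \<le> ln (2^3)" using pi_less_4 pi_gt3 by (intro ln_mono) auto
  also have "\<dots> = 3 * ln 2" by (subst ln_realpow) simp
  also have "\<dots> \<le> 3 * (25/36)" using ln2_le_25_over_36 by simp
  finally show ?thesis by simp
qed

lemma ln_54_ge: "2/9 \<le> ln (5/4::real)"
  using D1[of "1/4"] by simp

lemma B0:
  fixes a :: nat assumes "a \<ge> 2"
  shows "1 + ((real a - 1)/2) * ln (1 + (real a - 1)/2) - real a * ln (5/4)
     \<le> - ((real a - 1)/2) * ln (2 * pi) + real a ^ 2 / 4 + real a / 2"
proof -
  define u where "u = (real a - 1)/2"
  have u: "u \<ge> 1/2" using assms by (simp add: u_def)
  have ra: "real a = 2 * u + 1" by (simp add: u_def field_simps)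
  have h1: "u * ln (1 + u) \<le> u * u" using u by (intro mult_left_mono ln_add_one_self_le_self) auto
  have h2: "real a * (2/9) \<le> real a * ln (5/4)" using ln_54_ge by (intro mult_left_mono) auto
  have h3: "u * ln (2 * pi) \<le> u * (25/12)" using u ln_2pi_le by (intro mult_left_mono) auto
  have h4: "real a ^ 2 / 4 = u * u + u + 1/4" unfolding ra by (simp add: power2_eq_square algebra_simps)
  show ?thesis unfolding u_def[symmetric] using h1 h2 h3 h4 u ra by linarith
qed

lemma column:
  fixes a t :: nat and n :: "nat \<Rightarrow> nat"
  assumes a1: "a \<ge> 1" and t1: "t \<ge> 1" and Nt: "sum n {1..a} \<le> t"
  shows "(\<Sum>i\<in>{1..a}. real (n i) * ln (real (n i) / real (sum n {1..a})))
       + ln (Gamma (real (sum n {1..a}) + real a / 2)) - (\<Sum>i\<in>{1..a}. ln (Gamma (real (n i) + 1/2)))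
     \<le> ((real a - 1)/2) * ln (real t / (2 * pi)) + (real a ^ 2 / 4 + real a / 2)"
proof (cases "a = 1")
  case True
  then show ?thesis by (cases "n 1 = 0") auto
next
  case False
  then have a2: "a \<ge> 2" using a1 by simp
  define N where "N = sum n {1..a}"
  define s where "s = (real a - 1)/2"
  have s0: "s \<ge> 0" using a1 by (simp add: s_def)
  have lt: "ln (real t / (2 * pi)) = ln (real t) - ln (2 * pi)" using t1 pi_gt_zero by (simp add: ln_divide_pos)
  have lt0: "ln (real t) \<ge> 0" using t1 by simp
  have low: "(\<Sum>i\<in>{1..a}. ln (Gamma (real (n i) + 1/2))) \<ge>
       (\<Sum>i\<in>{1..a}. ln (5/4) + real (n i) * ln (real (n i)) - real (n i))"
    by (intro sum_mono lnGamma_half_lower)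
  have lowe: "(\<Sum>i\<in>{1..a}. ln (5/4) + real (n i) * ln (real (n i)) - real (n i)) =
     real a * ln (5/4) + (\<Sum>i\<in>{1..a}. real (n i) * ln (real (n i))) - real N"
    by (simp add: sum.distrib sum_subtractf N_def)
  have B: "1 + s * ln (1 + s) - real a * ln (5/4) \<le> - s * ln (2 * pi) + real a ^ 2 / 4 + real a / 2"
    unfolding s_def by (rule B0[OF a2])
  show ?thesis
  proof (cases "N = 0")
    case True
    then have n0: "\<forall>i\<in>{1..a}. n i = 0" by (simp add: N_def)
    have z: "(\<Sum>i\<in>{1..a}. real (n i) * ln (real (n i) / real N)) = 0" using n0 by simp
    have z2: "(\<Sum>i\<in>{1..a}. real (n i) * ln (real (n i))) = 0" using n0 by simp
    have g1: "ln (Gamma (real a / 2)) \<le> ln (Gamma (real 1 + real a / 2))"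
    proof -
      have g0: "Gamma (real a / 2 + 1) = (real a / 2) * Gamma (real a / 2)"
        using a2 by (intro Gamma_plus1) (auto dest!: nonpos_Ints_nonpos)
      have ee: "real 1 + real a / 2 = real a / 2 + 1" by simp
      have gp: "Gamma (real a / 2) > 0" using a2 by simp
      have "1 * Gamma (real a / 2) \<le> (real a / 2) * Gamma (real a / 2)"
        using a2 gp by (intro mult_right_mono) auto
      then have "Gamma (real a / 2) \<le> Gamma (real 1 + real a / 2)"
        unfolding ee g0 by simp
      then show ?thesis using a2 by simp
    qed
    have g2: "ln (Gamma (real 1 + real a / 2)) \<le> 1 + s * ln (1 + s) + real 1 * ln (real 1) - real 1 + s * ln (real 1)"
      unfolding s_def by (rule lnGamma_upper[OF _ a2]) simp
    have "(\<Sum>i\<in>{1..a}. real (n i) * ln (real (n i) / real N)) + ln (Gamma (real N + real a / 2))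
        - (\<Sum>i\<in>{1..a}. ln (Gamma (real (n i) + 1/2))) \<le> 1 + s * ln (1 + s) - real a * ln (5/4)"
      using z z2 g1 g2 low lowe True by simp
    also have "\<dots> \<le> s * ln (real t / (2 * pi)) + (real a ^ 2 / 4 + real a / 2)"
    proof -
      have "s * ln (real t) \<ge> 0" using lt0 s0 by simp
      moreover have "s * ln (real t / (2 * pi)) = s * ln (real t) - s * ln (2 * pi)" unfolding lt by (rule right_diff_distrib)
      ultimately show ?thesis using B by linarith
    qed
    finally show ?thesis unfolding N_def s_def .
  next
    case False
    then have N1: "N \<ge> 1" by simp
    have e: "(\<Sum>i\<in>{1..a}. real (n i) * ln (real (n i) / real N)) =
       (\<Sum>i\<in>{1..a}. real (n i) * ln (real (n i))) - real N * ln (real N)"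
    proof -
      have "(\<Sum>i\<in>{1..a}. real (n i) * ln (real (n i) / real N)) =
         (\<Sum>i\<in>{1..a}. real (n i) * ln (real (n i)) - real (n i) * ln (real N))"
        using N1 by (intro sum.cong refl) (auto simp: ln_div algebra_simps)
      then show ?thesis by (simp add: sum_subtractf sum_distrib_right[symmetric] N_def)
    qed
    have up: "ln (Gamma (real N + real a / 2)) \<le> 1 + s * ln (1 + s) + real N * ln (real N) - real N + s * ln (real N)"
      unfolding s_def by (rule lnGamma_upper[OF N1 a2])
    have lnN: "s * ln (real N) \<le> s * ln (real t)"
    proof -
      have rN: "real N \<le> real t" unfolding N_def using Nt by (simp only: of_nat_le_iff)
      have rN1: "real N \<ge> 1" using N1 by simp
      show ?thesis using rN rN1 s0 by (intro mult_left_mono ln_mono) auto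
    qed
    have "(\<Sum>i\<in>{1..a}. real (n i) * ln (real (n i) / real N)) + ln (Gamma (real N + real a / 2))
        - (\<Sum>i\<in>{1..a}. ln (Gamma (real (n i) + 1/2))) \<le> 1 + s * ln (1 + s) - real a * ln (5/4) + s * ln (real t)"
      using e up low lowe lnN by linarith
    also have "\<dots> \<le> s * ln (real t / (2 * pi)) + (real a ^ 2 / 4 + real a / 2)"
    proof -
      have "s * ln (real t / (2 * pi)) = s * ln (real t) - s * ln (2 * pi)" unfolding lt by (rule right_diff_distrib)
      then show ?thesis using B by linarith
    qed
    finally show ?thesis unfolding N_def s_def .
  qed
qed

lemma cnt_sum_le:
  assumes "\<forall>k\<in>{1..t}. x k \<in> {1..a}"
  shows "(\<Sum>i\<in>{1..a}. cnt t x y i j) \<le> t"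
proof -
  define S where "S = {k\<in>{1..t}. y k = j}"
  have fS: "finite S" by (simp add: S_def)
  have "(\<Sum>i\<in>{1..a}. cnt t x y i j) = (\<Sum>i\<in>{1..a}. \<Sum>k\<in>{k. k \<in> S \<and> x k = i}. (1::nat))"
    unfolding cnt_def S_def by (intro sum.cong refl) (simp add: conj_commute conj_left_commute)
  also have "\<dots> = (\<Sum>k\<in>S. (1::nat))"
    using assms fS by (intro sum.group) (auto simp: S_def)
  also have "\<dots> = card S" by simp
  also have "\<dots> \<le> card {1..t}" by (intro card_mono) (auto simp: S_def)
  finally show ?thesis by simp
qed

theorem lemma2:
  fixes a b t :: nat and x y :: "nat \<Rightarrow> nat" and \<theta>hat :: "nat \<Rightarrow> nat \<Rightarrow> real"
  assumes "a \<ge> 1" and "b \<ge> 1" and "t \<ge> 1"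
    and "\<forall>k\<in>{1..t}. x k \<in> {1..a}" and "\<forall>k\<in>{1..t}. y k \<in> {1..b}"
    and "\<theta>hat \<in> Lambda a b"
    and "\<forall>\<theta>\<in>Lambda a b. p_cond t x y \<theta> \<le> p_cond t x y \<theta>hat"
  shows "log 2 (p_cond t x y \<theta>hat / p_U a b t x y)
    \<le> (real (a - 1) * real b / 2) * log 2 (real t / (2 * pi))
      + real b * log 2 (Gamma (1/2) ^ a / Gamma (real a / 2))
      + (real a ^ 2 * real b / 4 + real a * real b / 2) * log 2 (exp 1)"
proof -
  note a1 = assms(1) and t1 = assms(3) and xa = assms(4) and yb = assms(5) and th = assms(6) and mx = assms(7)
  define n where "n = cnt t x y"
  define Nj where "Nj j = (\<Sum>i\<in>{1..a}. n i j)" for j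
  define Q where "Q j = (\<Prod>i\<in>{1..a}. (real (n i j) / real (Nj j)) ^ n i j)" for j
  define G where "G j = Gcol a n j" for j
  define G0 where "G0 = Gamma (1/2) ^ a / Gamma (real a / 2)"
  define s where "s = (real a - 1)/2"
  define R where "R = s * ln (real t / (2*pi)) + ln G0 + (real a^2/4 + real a/2)"
  define W where "W j = Q j * G0 / G j" for j
  have G0eq: "Gcol a (\<lambda>_ _. 0) j = G0" for j
    unfolding Gcol_def G0_def by simp
  have G0pos: "G0 > 0" unfolding G0_def using a1 by (intro divide_pos_pos) auto
  have Gpos: "G j > 0" for j unfolding G_def by (rule Gcol_pos[OF a1])
  have Qf: "(real (n i j) / real (Nj j)) ^ n i j > 0" if i: "i \<in> {1..a}" for i j
  proof (cases "n i j = 0")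
    case False
    have "n i j \<le> Nj j" unfolding Nj_def using i by (intro member_le_sum) auto
    then show ?thesis using False by simp
  qed simp
  have Qpos: "Q j > 0" for j
    unfolding Q_def using Qf by (intro prod_pos) auto
  have Wpos: "W j > 0" for j unfolding W_def using Qpos Gpos G0pos by simp
  have pU: "p_U a b t x y = (\<Prod>j\<in>{1..b}. G j / G0)"
    unfolding pU_eq[OF a1 xa yb] G_def n_def G0eq ..
  have pUpos: "p_U a b t x y > 0" unfolding pU using Gpos G0pos by (intro prod_pos) simp
  have thnn: "\<forall>j\<in>{1..b}. \<forall>i\<in>{1..a}. 0 \<le> \<theta>hat i j" and thsum: "\<forall>j\<in>{1..b}. (\<Sum>i=1..a. \<theta>hat i j) = 1"
    using th unfolding Lambda_def by auto
  have phat_le: "p_cond t x y \<theta>hat \<le> (\<Prod>j\<in>{1..b}. Q j)"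
  proof -
    have "p_cond t x y \<theta>hat = (\<Prod>i\<in>{1..a}. \<Prod>j\<in>{1..b}. \<theta>hat i j ^ n i j)"
      unfolding n_def by (rule pcond_group[OF xa yb])
    also have "\<dots> = (\<Prod>j\<in>{1..b}. \<Prod>i\<in>{1..a}. \<theta>hat i j ^ n i j)" by (rule prod.swap)
    also have "\<dots> \<le> (\<Prod>j\<in>{1..b}. Q j)"
    proof (intro prod_mono conjI)
      fix j assume j: "j \<in> {1..b}"
      show "0 \<le> (\<Prod>i\<in>{1..a}. \<theta>hat i j ^ n i j)" using thnn j by (intro prod_nonneg) auto
      show "(\<Prod>i\<in>{1..a}. \<theta>hat i j ^ n i j) \<le> Q j"
        unfolding Q_def Nj_def using thnn thsum j by (intro gibbs) auto
    qed
    finally show ?thesis .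
  qed
  have phat_pos: "p_cond t x y \<theta>hat > 0"
  proof -
    define \<theta>u :: "nat \<Rightarrow> nat \<Rightarrow> real" where "\<theta>u = (\<lambda>i j. 1 / real a)"
    have "\<theta>u \<in> Lambda a b" unfolding Lambda_def \<theta>u_def using a1 by auto
    then have "p_cond t x y \<theta>u \<le> p_cond t x y \<theta>hat" using mx by blast
    moreover have "p_cond t x y \<theta>u > 0" unfolding p_cond_def \<theta>u_def using a1 by (intro prod_pos) auto
    ultimately show ?thesis by simp
  qed
  have colb: "ln (Q j) - ln (G j) \<le> s * ln (real t / (2*pi)) + (real a^2/4 + real a/2)" if j: "j \<in> {1..b}" for j
  proof -
    have lQ: "ln (Q j) = (\<Sum>i\<in>{1..a}. real (n i j) * ln (real (n i j) / real (Nj j)))"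
    proof -
      have "ln (Q j) = (\<Sum>i\<in>{1..a}. ln ((real (n i j) / real (Nj j)) ^ n i j))"
      proof -
        have nz: "\<And>i. i \<in> {1..a} \<Longrightarrow> (real (n i j)/real (Nj j))^n i j \<noteq> 0"
          using Qf[of _ j] by (metis less_irrefl)
        show ?thesis unfolding Q_def by (rule ln_prod) (simp, rule nz)
      qed
      then show ?thesis by (simp add: ln_realpow)
    qed
    have lG: "ln (G j) = (\<Sum>i\<in>{1..a}. ln (Gamma (real (n i j) + 1/2))) - ln (Gamma (real (Nj j) + real a / 2))"
    proof -
      have p: "(\<Prod>i\<in>{1..a}. Gamma (real (n i j) + 1/2)) > 0" by (intro prod_pos) auto
      have d: "Gamma (real (Nj j) + real a / 2) > 0" using a1 by (intro Gamma_real_pos) (auto intro: add_nonneg_pos)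
      have "ln (G j) = ln (\<Prod>i\<in>{1..a}. Gamma (real (n i j) + 1/2)) - ln (Gamma (real (Nj j) + real a / 2))"
        unfolding G_def Gcol_def Nj_def using p d Nj_def by (simp add: ln_divide_pos)
      also have "ln (\<Prod>i\<in>{1..a}. Gamma (real (n i j) + 1/2)) = (\<Sum>i\<in>{1..a}. ln (Gamma (real (n i j) + 1/2)))"
        by (subst ln_prod) (auto simp: Gamma_eq_zero_iff dest!: nonpos_Ints_nonpos)
      finally show ?thesis .
    qed
    have Nt: "sum (\<lambda>i. n i j) {1..a} \<le> t" unfolding n_def by (rule cnt_sum_le[OF xa])
    have "(\<Sum>i\<in>{1..a}. real (n i j) * ln (real (n i j) / real (sum (\<lambda>i. n i j) {1..a})))
       + ln (Gamma (real (sum (\<lambda>i. n i j) {1..a}) + real a / 2)) - (\<Sum>i\<in>{1..a}. ln (Gamma (real (n i j) + 1/2)))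
     \<le> ((real a - 1)/2) * ln (real t / (2 * pi)) + (real a ^ 2 / 4 + real a / 2)"
      by (rule column[OF a1 t1 Nt])
    then show ?thesis unfolding lQ lG s_def Nj_def by simp
  qed
  have lW: "ln (W j) \<le> R" if "j \<in> {1..b}" for j
  proof -
    have "ln (W j) = ln (Q j) + ln G0 - ln (G j)"
      unfolding W_def using Qpos[of j] G0pos Gpos[of j] by (simp add: ln_divide_pos ln_mult_pos)
    then show ?thesis using colb[OF that] unfolding R_def by simp
  qed
  have ratio: "p_cond t x y \<theta>hat / p_U a b t x y \<le> (\<Prod>j\<in>{1..b}. W j)"
  proof -
    have "p_cond t x y \<theta>hat / p_U a b t x y \<le> (\<Prod>j\<in>{1..b}. Q j) / p_U a b t x y"
      using phat_le pUpos by (intro divide_right_mono) auto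
    also have "\<dots> = (\<Prod>j\<in>{1..b}. W j)"
      unfolding pU W_def prod_dividef[symmetric] using G0pos Gpos by (intro prod.cong refl) (simp add: field_simps)
    finally show ?thesis .
  qed
  have "log 2 (p_cond t x y \<theta>hat / p_U a b t x y) \<le> log 2 (\<Prod>j\<in>{1..b}. W j)"
    using ratio phat_pos pUpos by (subst log_le_cancel_iff) (auto intro!: divide_pos_pos prod_pos Wpos)
  also have "\<dots> = (\<Sum>j\<in>{1..b}. ln (W j)) / ln 2"
    unfolding log_def using Wpos by (subst ln_prod) (auto simp: less_imp_neq[symmetric])
  also have "\<dots> \<le> (\<Sum>j\<in>{1..b}. R) / ln 2"
    by (intro divide_right_mono sum_mono lW) auto
  also have "\<dots> = real b * R / ln 2" by simp
  also have "\<dots> = (real (a - 1) * real b / 2) * log 2 (real t / (2 * pi))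
      + real b * log 2 (Gamma (1/2) ^ a / Gamma (real a / 2))
      + (real a ^ 2 * real b / 4 + real a * real b / 2) * log 2 (exp 1)"
    unfolding R_def s_def G0_def log_def using a1 by (simp add: of_nat_diff field_simps)
  finally show ?thesis .
qed

end
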